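(* Let $G$ be a finite graph, $(X^+,X^-)$ a pair of subsets of $V(G)$, $c\in V(G)$ and $r$ an integer such that $X^+\subseteq B_G(c,r)$ and $X^-\cap B_G(c,r)=\emptyset$. Let $X=X^+\cup X^-$, let $(A_1,A_2)$ be a separation of $G$ with $c\in A_1$ and $X\subseteq A_2$, and let $S=A_1\cap A_2$. Then \[A_2\cap\bigcup_{v\in S}B_G(v,r^+(v))\subseteq A_2\cap B_G(c,r)\subseteq A_2\cap\bigcup_{v\in S}B_G(v,r^-(v)-1).\]
   Context: $\mathrm{dist}_G$ is shortest-path distance ($\infty$ between different components), and $B_G(v,\rho)=\{w\in V(G):\mathrm{dist}_G(v,w)\le\rho\}$ for $\rho\in\mathbb{Z}\cup\{\pm\infty\}$ (balls of negative radius are empty; $\infty-1=\infty$, $r-\infty=-\infty$). A separation of $G$ is a pair $(A_1,A_2)$ with $A_1\cup A_2=V(G)$ and no edge between $A_1\setminus A_2$ and $A_2\setminus A_1$. Conventions: $\min\emptyset=\infty$, $\max\emptyset=-1$. For $v\in V(G)$: $r^+(v)=\max\{\mathrm{dist}_G(v,x):x\in X\cap B_G(v,r-\mathrm{dist}_G(c,v))\}$ and $r^-(v)=\min\{\mathrm{dist}_G(v,x):x\in X^-\}$. *)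

theory Defs
  imports "HOL-Library.Extended_Real"
begin

definition fin_graph :: "'a set \<Rightarrow> ('a \<Rightarrow> 'a \<Rightarrow> bool) \<Rightarrow> bool" where
  "fin_graph V E \<longleftrightarrow> finite V \<and> (\<forall>x y. E x y \<longrightarrow> x \<in> V \<and> y \<in> V)
     \<and> (\<forall>x y. E x y \<longrightarrow> E y x) \<and> (\<forall>x. \<not> E x x)"

definition edge_rel :: "'a set \<Rightarrow> ('a \<Rightarrow> 'a \<Rightarrow> bool) \<Rightarrow> ('a \<times> 'a) set" where
  "edge_rel V E = {(x, y). x \<in> V \<and> y \<in> V \<and> E x y}"

text \<open>Shortest-path distance, valued in extended reals; infinity if no path.\<close>
definition gdist :: "'a set \<Rightarrow> ('a \<Rightarrow> 'a \<Rightarrow> bool) \<Rightarrow> 'a \<Rightarrow> 'a \<Rightarrow> ereal" where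
  "gdist V E v w = (INF n \<in> {n. (v, w) \<in> edge_rel V E ^^ n}. ereal (real n))"

definition gball :: "'a set \<Rightarrow> ('a \<Rightarrow> 'a \<Rightarrow> bool) \<Rightarrow> 'a \<Rightarrow> ereal \<Rightarrow> 'a set" where
  "gball V E v \<rho> = {w \<in> V. gdist V E v w \<le> \<rho>}"

definition separation :: "'a set \<Rightarrow> ('a \<Rightarrow> 'a \<Rightarrow> bool) \<Rightarrow> 'a set \<Rightarrow> 'a set \<Rightarrow> bool" where
  "separation V E A1 A2 \<longleftrightarrow> A1 \<subseteq> V \<and> A2 \<subseteq> V \<and> A1 \<union> A2 = V \<and>
     (\<forall>x y. x \<in> A1 - A2 \<longrightarrow> y \<in> A2 - A1 \<longrightarrow> \<not> E x y)"

definition emax :: "ereal set \<Rightarrow> ereal" where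
  "emax S = (if S = {} then -1 else Sup S)"

definition emin :: "ereal set \<Rightarrow> ereal" where
  "emin S = (if S = {} then \<infinity> else Inf S)"

definition rplus :: "'a set \<Rightarrow> ('a \<Rightarrow> 'a \<Rightarrow> bool) \<Rightarrow> 'a set \<Rightarrow> 'a \<Rightarrow> int \<Rightarrow> 'a \<Rightarrow> ereal" where
  "rplus V E X c r v =
     emax (gdist V E v ` (X \<inter> gball V E v (ereal (real_of_int r) - gdist V E c v)))"

definition rminus :: "'a set \<Rightarrow> ('a \<Rightarrow> 'a \<Rightarrow> bool) \<Rightarrow> 'a set \<Rightarrow> 'a \<Rightarrow> ereal" where
  "rminus V E Xm v = emin (gdist V E v ` Xm)"

end

theory Submission
  imports Defs
begin

lemma gdist_cases:
  "(gdist V E v w = \<infinity> \<and> (\<forall>n. (v,w) \<notin> edge_rel V E ^^ n)) \<or>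
   (\<exists>m. gdist V E v w = ereal (real m) \<and> (v,w) \<in> edge_rel V E ^^ m)"
proof (cases "\<exists>n. (v,w) \<in> edge_rel V E ^^ n")
  case True
  define S where "S = {n. (v, w) \<in> edge_rel V E ^^ n}"
  define m where "m = Least (\<lambda>n. n \<in> S)"
  have mS: "m \<in> S" using True unfolding m_def S_def by (metis LeastI mem_Collect_eq)
  have "gdist V E v w = ereal (real m)"
  proof (rule antisym)
    show "gdist V E v w \<le> ereal (real m)" unfolding gdist_def S_def[symmetric]
      using mS by (rule INF_lower)
    show "ereal (real m) \<le> gdist V E v w" unfolding gdist_def S_def[symmetric]
      by (rule INF_greatest) (simp add: m_def Least_le)
  qed
  then show ?thesis using mS S_def by auto
next
  case False
  then show ?thesis unfolding gdist_def by (simp add: top_ereal_def)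
qed

lemma gdist_le: "(v,w) \<in> edge_rel V E ^^ n \<Longrightarrow> gdist V E v w \<le> ereal (real n)"
  unfolding gdist_def by (rule INF_lower) simp

lemma gdist_nonneg: "gdist V E v w \<ge> 0"
  using gdist_cases[of V E v w] by auto

lemma gdist_tri: "gdist V E u w \<le> gdist V E u v + gdist V E v w"
proof -
  consider "gdist V E u v = \<infinity>" | "gdist V E v w = \<infinity>"
    | m n where "gdist V E u v = ereal (real m)" "(u,v) \<in> edge_rel V E ^^ m"
       "gdist V E v w = ereal (real n)" "(v,w) \<in> edge_rel V E ^^ n"
    using gdist_cases[of V E u v] gdist_cases[of V E v w] by blast
  then show ?thesis
  proof cases
    case 1 then show ?thesis using gdist_nonneg[of V E v w] by simp
  next
    case 2 then show ?thesis using gdist_nonneg[of V E u v] by simp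
  next
    case 3
    then have "(u,w) \<in> edge_rel V E ^^ (m+n)" by (simp add: relpow_add relcomp.relcompI)
    then have "gdist V E u w \<le> ereal (real (m+n))" by (rule gdist_le)
    then show ?thesis using 3 by simp
  qed
qed

lemma path_cross:
  assumes "separation V E A1 A2"
  shows "(c,w) \<in> edge_rel V E ^^ n \<Longrightarrow> c \<in> A1 \<Longrightarrow> w \<in> A2 \<Longrightarrow>
    \<exists>k\<le>n. \<exists>v\<in>A1\<inter>A2. (c,v) \<in> edge_rel V E ^^ k \<and> (v,w) \<in> edge_rel V E ^^ (n-k)"
proof (induction n arbitrary: c)
  case 0
  then show ?case by auto
next
  case (Suc n)
  show ?case
  proof (cases "c \<in> A2")
    case True
    then show ?thesis using Suc.prems by (intro exI[of _ 0]) auto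
  next
    case False
    obtain y where y: "(c,y) \<in> edge_rel V E" "(y,w) \<in> edge_rel V E ^^ n"
      using Suc.prems(1) relpow_Suc_D2 by metis
    have yV: "y \<in> V" "E c y" using y(1) by (auto simp: edge_rel_def)
    have "y \<in> A1" using assms yV False Suc.prems(2) unfolding separation_def by blast
    then obtain k v where kv: "k\<le>n" "v\<in>A1\<inter>A2" "(y,v) \<in> edge_rel V E ^^ k"
        "(v,w) \<in> edge_rel V E ^^ (n-k)"
      using Suc.IH[OF y(2)] Suc.prems(3) by blast
    have "(c,v) \<in> edge_rel V E ^^ Suc k" using y(1) kv(3) by (rule relpow_Suc_I2)
    then show ?thesis using kv by (intro exI[of _ "Suc k"]) auto
  qed
qed

theorem lemma5p2:
  fixes V :: "'a set" and E :: "'a \<Rightarrow> 'a \<Rightarrow> bool"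
    and Xp Xm A1 A2 :: "'a set" and c :: 'a and r :: int
  assumes "fin_graph V E"
    and "Xp \<subseteq> V" and "Xm \<subseteq> V" and "c \<in> V"
    and "Xp \<subseteq> gball V E c (ereal (real_of_int r))"
    and "Xm \<inter> gball V E c (ereal (real_of_int r)) = {}"
    and "separation V E A1 A2" and "c \<in> A1" and "Xp \<union> Xm \<subseteq> A2"
  shows "A2 \<inter> (\<Union>v \<in> A1 \<inter> A2. gball V E v (rplus V E (Xp \<union> Xm) c r v))
           \<subseteq> A2 \<inter> gball V E c (ereal (real_of_int r))
       \<and> A2 \<inter> gball V E c (ereal (real_of_int r))
           \<subseteq> A2 \<inter> (\<Union>v \<in> A1 \<inter> A2. gball V E v (rminus V E Xm v - 1))"
proof
  show "A2 \<inter> (\<Union>v \<in> A1 \<inter> A2. gball V E v (rplus V E (Xp \<union> Xm) c r v))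
           \<subseteq> A2 \<inter> gball V E c (ereal (real_of_int r))"
  proof
    fix w assume "w \<in> A2 \<inter> (\<Union>v \<in> A1 \<inter> A2. gball V E v (rplus V E (Xp \<union> Xm) c r v))"
    then obtain v where w: "w \<in> A2" "w \<in> V" "gdist V E v w \<le> rplus V E (Xp \<union> Xm) c r v"
      unfolding gball_def by auto
    define T where "T = (Xp \<union> Xm) \<inter> gball V E v (ereal (real_of_int r) - gdist V E c v)"
    have Tne: "T \<noteq> {}"
    proof
      assume "T = {}"
      then have "rplus V E (Xp \<union> Xm) c r v = -1" unfolding rplus_def emax_def T_def by simp
      then have "gdist V E v w \<le> -1" using w(3) by simp
      moreover have "(0::ereal) \<le> gdist V E v w" by (rule gdist_nonneg)
      ultimately have "(0::ereal) \<le> -1" by (rule order_trans[rotated])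
      then show False by simp
    qed
    have "rplus V E (Xp \<union> Xm) c r v = Sup (gdist V E v ` T)"
      using Tne unfolding rplus_def emax_def T_def by simp
    also have "\<dots> \<le> ereal (real_of_int r) - gdist V E c v"
      by (rule SUP_least) (auto simp: T_def gball_def)
    finally have le: "gdist V E v w \<le> ereal (real_of_int r) - gdist V E c v" using w(3) by simp
    obtain a where a: "gdist V E c v = ereal a" "a \<ge> 0"
    proof (cases "gdist V E c v")
      case (real a) then show ?thesis using that gdist_nonneg[of V E c v] by auto
    next
      case PInf then show ?thesis using le gdist_nonneg[of V E v w] by simp
    next
      case MInf then show ?thesis using gdist_nonneg[of V E c v] by simp
    qed
    obtain b where b: "gdist V E v w = ereal b"
      using le a gdist_nonneg[of V E v w] by (cases "gdist V E v w") auto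
    have "gdist V E c w \<le> gdist V E c v + gdist V E v w" by (rule gdist_tri)
    also have "\<dots> \<le> ereal (real_of_int r)" using le a b by simp
    finally show "w \<in> A2 \<inter> gball V E c (ereal (real_of_int r))"
      using w unfolding gball_def by simp
  qed
next
  show "A2 \<inter> gball V E c (ereal (real_of_int r))
           \<subseteq> A2 \<inter> (\<Union>v \<in> A1 \<inter> A2. gball V E v (rminus V E Xm v - 1))"
  proof
    fix w assume w0: "w \<in> A2 \<inter> gball V E c (ereal (real_of_int r))"
    then have w: "w \<in> A2" "w \<in> V" "gdist V E c w \<le> ereal (real_of_int r)"
      unfolding gball_def by auto
    obtain n where n: "gdist V E c w = ereal (real n)" "(c,w) \<in> edge_rel V E ^^ n"
      using gdist_cases[of V E c w] w(3) by auto
    have nr: "real n \<le> real_of_int r" using n w(3) by simp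
    obtain k v where kv: "k\<le>n" "v\<in>A1\<inter>A2" "(c,v) \<in> edge_rel V E ^^ k"
        "(v,w) \<in> edge_rel V E ^^ (n-k)"
      using path_cross[OF assms(7) n(2) assms(8) w(1)] by blast
    have dvw: "gdist V E v w \<le> ereal (real (n-k))" using kv(4) by (rule gdist_le)
    have key: "gdist V E v w + 1 \<le> gdist V E v x" if x: "x \<in> Xm" for x
    proof -
      consider "gdist V E v x = \<infinity>"
        | m where "gdist V E v x = ereal (real m)" "(v,x) \<in> edge_rel V E ^^ m"
        using gdist_cases[of V E v x] by blast
      then show ?thesis
      proof cases
        case 1 then show ?thesis by simp
      next
        case 2
        have "(c,x) \<in> edge_rel V E ^^ (k+m)" using kv(3) 2(2)
          by (simp add: relpow_add relcomp.relcompI)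
        then have "gdist V E c x \<le> ereal (real (k+m))" by (rule gdist_le)
        moreover have "\<not> gdist V E c x \<le> ereal (real_of_int r)"
          using assms(6) assms(3) x unfolding gball_def by auto
        ultimately have "\<not> ereal (real (k+m)) \<le> ereal (real_of_int r)"
          using order_trans by blast
        then have "real (k+m) > real_of_int r" by simp
        then have "m \<ge> n - k + 1" using nr kv(1) by linarith
        then have m1: "ereal (real (n-k)) + 1 \<le> ereal (real m)" by simp
        have "gdist V E v w + 1 \<le> ereal (real (n-k)) + 1" using dvw by (rule add_right_mono)
        then have "gdist V E v w + 1 \<le> ereal (real m)" using m1 by (rule order_trans)
        then show ?thesis using 2(1) by simp
      qed
    qed
    have "gdist V E v w \<le> rminus V E Xm v - 1"
    proof (cases "Xm = {}")
      case True then show ?thesis unfolding rminus_def emin_def by simp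
    next
      case False
      have "gdist V E v w + 1 \<le> Inf (gdist V E v ` Xm)"
        by (rule INF_greatest) (rule key)
      moreover obtain b where "gdist V E v w = ereal b" using dvw gdist_nonneg[of V E v w]
        by (cases "gdist V E v w") auto
      ultimately show ?thesis using False unfolding rminus_def emin_def
        by (cases "Inf (gdist V E v ` Xm)") (auto simp: one_ereal_def)
    qed
    then show "w \<in> A2 \<inter> (\<Union>v \<in> A1 \<inter> A2. gball V E v (rminus V E Xm v - 1))"
      using w kv(2) unfolding gball_def by blast
  qed
qed

end
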